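(* Under the setting below, for any sequences generated by Algorithm BC (with arbitrary index selection) the following hold: (i) for every $k$, $\Phi^{\mathrm{FB}}_\Gamma(\bm x^{k+1})\le\Phi^{\mathrm{FB}}_\Gamma(\bm x^k)-\sum_{i\in I^{k+1}}\frac{\xi_i}{2\gamma_i}\|z_i^k-x_i^k\|^2$, where $\xi_i:=\frac{N-\gamma_iL_{f_i}}{N}>0$; (ii) $(\Phi^{\mathrm{FB}}_\Gamma(\bm x^k))_k$ is monotonically nonincreasing and converges to a finite value $\Phi_\star\ge\min\Phi$; (iii) $\Phi^{\mathrm{FB}}_\Gamma$ is constant, equal to $\Phi_\star$, on the set of accumulation points of $(\bm x^k)$; (iv) $\sum_k\|\bm x^{k+1}-\bm x^k\|^2<\infty$; (v) if $\Phi$ is coercive, then $(\bm x^k)$ and $(\bm z^k)$ are bounded.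
   Context: Setting: $N\ge1$, $n=\sum_{i=1}^N n_i$, $\bm x=(x_1,\dots,x_N)$ with $x_i\in\mathbb R^{n_i}$; $\Phi=F+G$ with $F(\bm x)=\frac1N\sum_i f_i(x_i)$, each $f_i:\mathbb R^{n_i}\to\mathbb R$ differentiable with $L_{f_i}$-Lipschitz gradient, $G:\mathbb R^n\to\mathbb R\cup\{+\infty\}$ proper lsc, $\arg\min\Phi\ne\emptyset$. $\gamma_i\in(0,N/L_{f_i})$, $\Gamma=\operatorname{blockdiag}(\gamma_1I_{n_1},\dots,\gamma_NI_{n_N})$, $\|x\|_V^2=\langle x,Vx\rangle$, $\operatorname{prox}_G^{V}(u)=\arg\min_w\{G(w)+\frac12\|w-u\|_V^2\}$, $\mathbf T(\bm x)=\operatorname{prox}_G^{\Gamma^{-1}}(\bm x-\Gamma\nabla F(\bm x))$. Forward-backward envelope: $\Phi^{\mathrm{FB}}_\Gamma(\bm x):=\inf_{\bm w}\{F(\bm x)+\langle\nabla F(\bm x),\bm w-\bm x\rangle+G(\bm w)+\frac12\|\bm w-\bm x\|^2_{\Gamma^{-1}}\}$. Algorithm BC: given $\bm x^0\in\mathbb R^n$, for $k=0,1,\dots$: pick $\bm z^k\in\mathbf T(\bm x^k)$; select a set of indices $I^{k+1}\subseteq[N]$; set $x_i^{k+1}=z_i^k$ for $i\in I^{k+1}$ and $x_i^{k+1}=x_i^k$ for $i\notin I^{k+1}$. *)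

theory Defs
  imports "HOL-Analysis.Analysis"
begin

(* Block setting: coordinates indexed by a finite type 'n (so R^n = real^'n),
   blocks indexed by a finite type 'b (so N = CARD('b)), and blk j is the block
   containing coordinate j. Block i is R^{n_i} with n_i = card {j. blk j = i}. *)

definition lsc :: "('a::topological_space \<Rightarrow> ereal) \<Rightarrow> bool" where
  "lsc G \<longleftrightarrow> (\<forall>x. G x \<le> Liminf (at x) G)"

definition proper_fun :: "('a \<Rightarrow> ereal) \<Rightarrow> bool" where
  "proper_fun G \<longleftrightarrow> (\<forall>x. G x \<noteq> -\<infinity>) \<and> (\<exists>x. G x \<noteq> \<infinity>)"

definition blk_part :: "('n \<Rightarrow> 'b) \<Rightarrow> 'b \<Rightarrow> real^'n \<Rightarrow> real^'n" where
  "blk_part blk i x = (\<chi> j. if blk j = i then x $ j else 0)"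

definition Fsum :: "('b::finite \<Rightarrow> real^'n \<Rightarrow> real) \<Rightarrow> real^'n \<Rightarrow> real" where
  "Fsum f x = (1 / real CARD('b)) * (\<Sum>i\<in>UNIV. f i x)"

definition gradF :: "('b::finite \<Rightarrow> real^'n \<Rightarrow> real^'n) \<Rightarrow> real^'n \<Rightarrow> real^'n" where
  "gradF gf x = (1 / real CARD('b)) *\<^sub>R (\<Sum>i\<in>UNIV. gf i x)"

definition Gam_mul :: "('n \<Rightarrow> 'b) \<Rightarrow> ('b \<Rightarrow> real) \<Rightarrow> real^'n \<Rightarrow> real^'n" where
  "Gam_mul blk gam v = (\<chi> j. gam (blk j) * v $ j)"

definition wnorm_sq :: "('n::finite \<Rightarrow> 'b) \<Rightarrow> ('b \<Rightarrow> real) \<Rightarrow> real^'n \<Rightarrow> real" where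
  "wnorm_sq blk gam v = (\<Sum>j\<in>UNIV. (v $ j)^2 / gam (blk j))"

definition prox_set :: "('n::finite \<Rightarrow> 'b) \<Rightarrow> ('b \<Rightarrow> real) \<Rightarrow> (real^'n \<Rightarrow> ereal)
    \<Rightarrow> real^'n \<Rightarrow> (real^'n) set" where
  "prox_set blk gam G u = {w. \<forall>w'. G w + ereal (wnorm_sq blk gam (w - u) / 2)
                                 \<le> G w' + ereal (wnorm_sq blk gam (w' - u) / 2)}"

definition Tmap :: "('n::finite \<Rightarrow> 'b::finite) \<Rightarrow> ('b \<Rightarrow> real) \<Rightarrow> ('b \<Rightarrow> real^'n \<Rightarrow> real^'n)
    \<Rightarrow> (real^'n \<Rightarrow> ereal) \<Rightarrow> real^'n \<Rightarrow> (real^'n) set" where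
  "Tmap blk gam gf G x = prox_set blk gam G (x - Gam_mul blk gam (gradF gf x))"

definition Phi :: "('b::finite \<Rightarrow> real^'n \<Rightarrow> real) \<Rightarrow> (real^'n \<Rightarrow> ereal) \<Rightarrow> real^'n \<Rightarrow> ereal" where
  "Phi f G x = ereal (Fsum f x) + G x"

definition FBE :: "('n::finite \<Rightarrow> 'b::finite) \<Rightarrow> ('b \<Rightarrow> real) \<Rightarrow> ('b \<Rightarrow> real^'n \<Rightarrow> real)
    \<Rightarrow> ('b \<Rightarrow> real^'n \<Rightarrow> real^'n) \<Rightarrow> (real^'n \<Rightarrow> ereal) \<Rightarrow> real^'n \<Rightarrow> ereal" where
  "FBE blk gam f gf G x = (INF w. ereal (Fsum f x + gradF gf x \<bullet> (w - x)) + G w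
                                  + ereal (wnorm_sq blk gam (w - x) / 2))"

end

theory Submission
  imports Defs
begin


lemma bp_nth: "blk_part blk i v $ j = (if blk j = i then v $ j else 0)"
  by (simp add: blk_part_def)

lemma bp_diff: "blk_part blk i (u - v) = blk_part blk i u - blk_part blk i v"
  by (simp add: blk_part_def vec_eq_iff)

lemma bp_norm_le: "norm (blk_part blk i (v::real^'n)) \<le> norm v"
proof -
  have "(norm (blk_part blk i v))^2 \<le> (norm v)^2"
    unfolding power2_norm_eq_inner inner_vec_def
    by (rule sum_mono) (simp add: bp_nth)
  then show ?thesis by (simp add: power2_le_iff_abs_le)
qed

lemma norm_sq_bp: "(norm (blk_part blk i (v::real^'n::finite)))^2 = (\<Sum>j\<in>UNIV. if blk j = i then (v$j)^2 else 0)"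
  unfolding power2_norm_eq_inner inner_vec_def by (rule sum.cong) (auto simp: bp_nth power2_eq_square)

lemma wnorm_blocks:
  fixes blk :: "'n::finite \<Rightarrow> 'b::finite"
  shows "wnorm_sq blk gam v = (\<Sum>i\<in>UNIV. (norm (blk_part blk i v))^2 / gam i)"
proof -
  have "(\<Sum>i\<in>UNIV. (norm (blk_part blk i v))^2 / gam i)
      = (\<Sum>i\<in>UNIV. \<Sum>j\<in>UNIV. if blk j = i then (v$j)^2 / gam i else 0)"
    unfolding norm_sq_bp sum_divide_distrib by (intro sum.cong) auto
  also have "\<dots> = (\<Sum>j\<in>UNIV. \<Sum>i\<in>UNIV. if blk j = i then (v$j)^2 / gam i else 0)"
    by (rule sum.swap)
  also have "\<dots> = wnorm_sq blk gam v"
    unfolding wnorm_sq_def by (simp add: eq_commute[of "blk _"])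
  finally show ?thesis by simp
qed

lemma norm_blocks:
  fixes blk :: "'n::finite \<Rightarrow> 'b::finite"
  shows "(norm (v::real^'n))^2 = (\<Sum>i\<in>UNIV. (norm (blk_part blk i v))^2)"
proof -
  have "(norm v)^2 = (\<Sum>j\<in>UNIV. (v$j)^2)"
    unfolding power2_norm_eq_inner inner_vec_def by (simp add: power2_eq_square)
  then show ?thesis using wnorm_blocks[of blk "\<lambda>_. 1" v] by (simp add: wnorm_sq_def)
qed


locale setting =
  fixes blk :: "'n::finite \<Rightarrow> 'b::finite"
    and f :: "'b \<Rightarrow> real^'n \<Rightarrow> real"
    and gf :: "'b \<Rightarrow> real^'n \<Rightarrow> real^'n"
    and L gam :: "'b \<Rightarrow> real"
  assumes f_block: "\<And>i u v. blk_part blk i u = blk_part blk i v \<Longrightarrow> f i u = f i v"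
    and f_grad: "\<And>i u. (f i has_derivative (\<lambda>h. gf i u \<bullet> h)) (at u)"
    and L_nonneg: "\<And>i. L i \<ge> 0"
    and f_lip: "\<And>i u v. norm (gf i u - gf i v) \<le> L i * norm (blk_part blk i (u - v))"
begin

lemma gf_supp: "blk j \<noteq> i \<Longrightarrow> gf i u $ j = 0"
proof -
  assume bj: "blk j \<noteq> i"
  define h :: "real^'n" where "h = axis j 1"
  have cst: "f i (u + t *\<^sub>R h) = f i u" for t
    by (rule f_block) (simp add: blk_part_def vec_eq_iff h_def axis_def bj)
  have d1: "((\<lambda>t. f i (u + t *\<^sub>R h)) has_derivative (\<lambda>t. gf i u \<bullet> (t *\<^sub>R h))) (at 0)"
  proof -
    have inn: "((\<lambda>s. u + s *\<^sub>R h) has_derivative (\<lambda>s. s *\<^sub>R h)) (at 0)"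
      by (auto intro!: derivative_eq_intros)
    show ?thesis using has_derivative_compose[OF inn f_grad[of i "u + 0 *\<^sub>R h"]] by simp
  qed
  have d2: "((\<lambda>t. f i (u + t *\<^sub>R h)) has_derivative (\<lambda>t. 0)) (at 0)"
    by (simp add: cst)
  have "(\<lambda>t. gf i u \<bullet> (t *\<^sub>R h)) = (\<lambda>t::real. 0)"
    by (rule has_derivative_unique[OF d1 d2])
  then have "gf i u \<bullet> (1 *\<^sub>R h) = 0" by meson
  then show ?thesis by (simp add: h_def inner_axis)
qed

lemma gf_bp: "gf i u = blk_part blk i (gf i u)"
  using gf_supp by (auto simp: vec_eq_iff bp_nth)

lemma gf_inner_bp: "gf i u \<bullet> d = gf i u \<bullet> blk_part blk i d"
  unfolding inner_vec_def by (rule sum.cong) (auto simp: bp_nth gf_supp)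

lemma gf_block: "blk_part blk i u = blk_part blk i v \<Longrightarrow> gf i u = gf i v"
  using f_lip[of i u v] by (simp add: bp_diff)

lemma descent:
  "f i w \<le> f i x + gf i x \<bullet> (w - x) + L i / 2 * (norm (blk_part blk i (w - x)))^2"
proof -
  define d where "d = w - x"
  define nb where "nb = norm (blk_part blk i d)"
  define \<phi> where "\<phi> t = f i (x + t *\<^sub>R d) - t * (gf i x \<bullet> d) - L i / 2 * t^2 * nb^2" for t
  have "\<phi> 1 \<le> \<phi> 0"
  proof (rule DERIV_nonpos_imp_nonincreasing[of 0 1 \<phi>])
    fix t :: real assume t: "0 \<le> t" "t \<le> 1"
    have D: "(\<phi> has_real_derivative (gf i (x + t *\<^sub>R d) \<bullet> d - gf i x \<bullet> d - L i * t * nb^2)) (at t)"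
    proof -
      have "((\<lambda>t. f i (x + t *\<^sub>R d)) has_derivative (\<lambda>s. gf i (x + t *\<^sub>R d) \<bullet> (s *\<^sub>R d))) (at t)"
      proof -
        have inn: "((\<lambda>s. x + s *\<^sub>R d) has_derivative (\<lambda>s. s *\<^sub>R d)) (at t)"
          by (auto intro!: derivative_eq_intros)
        show ?thesis using has_derivative_compose[OF inn f_grad[of i "x + t *\<^sub>R d"]] by simp
      qed
      then have "((\<lambda>t. f i (x + t *\<^sub>R d)) has_real_derivative (gf i (x + t *\<^sub>R d) \<bullet> d)) (at t)"
        unfolding has_field_derivative_def by (simp add: mult.commute[of _ "gf i _ \<bullet> d"])
      then show ?thesis unfolding \<phi>_def
        by (auto intro!: derivative_eq_intros)
    qed
    have "(gf i (x + t *\<^sub>R d) - gf i x) \<bullet> d = (gf i (x + t *\<^sub>R d) - gf i x) \<bullet> blk_part blk i d"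
      by (simp add: inner_diff_left gf_inner_bp[of i _ d])
    also have "\<dots> \<le> norm (gf i (x + t *\<^sub>R d) - gf i x) * nb"
      unfolding nb_def by (rule norm_cauchy_schwarz)
    also have "\<dots> \<le> (L i * norm (blk_part blk i (t *\<^sub>R d))) * nb"
      using f_lip[of i "x + t *\<^sub>R d" x] by (auto intro!: mult_right_mono simp: nb_def)
    also have "norm (blk_part blk i (t *\<^sub>R d)) = t * nb"
    proof -
      have "blk_part blk i (t *\<^sub>R d) = t *\<^sub>R blk_part blk i d"
        by (simp add: blk_part_def vec_eq_iff)
      then show ?thesis using t by (simp add: nb_def)
    qed
    finally have "gf i (x + t *\<^sub>R d) \<bullet> d - gf i x \<bullet> d - L i * t * nb^2 \<le> 0"
      by (simp add: inner_diff_left power2_eq_square algebra_simps)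
    with D show "\<exists>y. (\<phi> has_real_derivative y) (at t) \<and> y \<le> 0" by blast
  qed simp
  then show ?thesis by (simp add: \<phi>_def d_def nb_def)
qed

end

locale setting2 = setting blk f gf L gam
  for blk :: "'n::finite \<Rightarrow> 'b::finite"
    and f :: "'b \<Rightarrow> real^'n \<Rightarrow> real"
    and gf :: "'b \<Rightarrow> real^'n \<Rightarrow> real^'n"
    and L gam :: "'b \<Rightarrow> real" +
  fixes G :: "real^'n \<Rightarrow> ereal"
  assumes G_proper: "proper_fun G"
    and G_lsc: "lsc G"
    and argmin_ne: "\<exists>xs. \<forall>y. Phi f G xs \<le> Phi f G y"
    and gam_pos: "\<And>i. gam i > 0"
    and gam_lt: "\<And>i. gam i * L i < real CARD('b)"
begin

definition xi where "xi i = (real CARD('b) - gam i * L i) / real CARD('b)"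
definition nb where "nb i v = norm (blk_part blk i v)"
definition AA where "AA x w = Fsum f x + gradF gf x \<bullet> (w - x) + wnorm_sq blk gam (w - x) / 2"
definition SS where "SS x w = (\<Sum>i\<in>UNIV. xi i / (2 * gam i) * (nb i (w - x))^2)"
definition trm where "trm z y i = (f i y + gf i y \<bullet> (z - y)) / real CARD('b) + (nb i (z - y))^2 / (2 * gam i)"

lemma aux_lin: "(a::real) \<le> b \<Longrightarrow> b = c + d \<Longrightarrow> e = p - d \<Longrightarrow> a + e \<le> c + p" by linarith

lemma NN_pos: "real CARD('b) > 0" by simp

lemma xi_pos: "xi i > 0"
  using gam_lt[of i] by (simp add: xi_def)

lemma xi_eq: "xi i / (2 * gam i) = 1 / (2 * gam i) - L i / (2 * real CARD('b))"
  using gam_pos[of i] by (simp add: xi_def field_simps)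

lemma AA_sum: "AA y z = (\<Sum>i\<in>UNIV. trm z y i)"
proof -
  have "AA y z = (\<Sum>i\<in>UNIV. f i y) / real CARD('b) + (\<Sum>i\<in>UNIV. gf i y \<bullet> (z - y)) / real CARD('b)
       + (\<Sum>i\<in>UNIV. (nb i (z - y))^2 / gam i) / 2"
    unfolding AA_def Fsum_def gradF_def wnorm_blocks[of blk gam] nb_def
    by (simp add: inner_sum_left)
  also have "\<dots> = (\<Sum>i\<in>UNIV. trm z y i)"
    unfolding trm_def sum.distrib sum_divide_distrib add_divide_distrib
    by (simp add: sum_divide_distrib[symmetric] algebra_simps)
  finally show ?thesis .
qed

lemma key_ineq: "Fsum f w + SS x w \<le> AA x w"
proof -
  have "Fsum f w + SS x w = (\<Sum>i\<in>UNIV. f i w / real CARD('b) + (1 / (2 * gam i) - L i / (2 * real CARD('b))) * (nb i (w - x))^2)"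
    unfolding Fsum_def SS_def xi_eq sum.distrib by (simp add: sum_divide_distrib)
  also have "\<dots> \<le> (\<Sum>i\<in>UNIV. (f i x + gf i x \<bullet> (w - x)) / real CARD('b) + (nb i (w - x))^2 / (2 * gam i))"
  proof (rule sum_mono)
    fix i
    have h: "f i w / real CARD('b) \<le> (f i x + gf i x \<bullet> (w - x) + L i / 2 * (nb i (w - x))^2) / real CARD('b)"
      using descent[of i w x] by (simp add: divide_right_mono nb_def)
    then show "f i w / real CARD('b) + (1 / (2 * gam i) - L i / (2 * real CARD('b))) * (nb i (w - x))^2
        \<le> (f i x + gf i x \<bullet> (w - x)) / real CARD('b) + (nb i (w - x))^2 / (2 * gam i)"
    proof -
      have e: "(f i x + gf i x \<bullet> (w - x) + L i / 2 * (nb i (w - x))^2) / real CARD('b)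
        = (f i x + gf i x \<bullet> (w - x)) / real CARD('b) + L i / (2 * real CARD('b)) * (nb i (w - x))^2"
        by (simp add: field_simps)
      have e2: "(1 / (2 * gam i) - L i / (2 * real CARD('b))) * (nb i (w - x))^2
         = (nb i (w - x))^2 / (2 * gam i) - L i / (2 * real CARD('b)) * (nb i (w - x))^2"
        by (simp add: field_simps)
      show ?thesis by (rule aux_lin[OF h e e2])
    qed
  qed
  also have "\<dots> = AA x w"
    unfolding AA_sum trm_def by simp
  finally show ?thesis .
qed


definition EE where "EE x w = ereal (Fsum f x + gradF gf x \<bullet> (w - x)) + G w + ereal (wnorm_sq blk gam (w - x) / 2)"

lemma FBE_EE: "FBE blk gam f gf G x = (INF w. EE x w)"
  unfolding FBE_def EE_def by simp

lemma EE_eq: "EE x w = ereal (AA x w) + G w"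
  unfolding EE_def AA_def by (cases "G w") simp_all

lemma wn_shift: "wnorm_sq blk gam (v + Gam_mul blk gam g)
    = wnorm_sq blk gam v + 2 * (g \<bullet> v) + (\<Sum>j\<in>UNIV. gam (blk j) * (g$j)^2)"
proof -
  have "wnorm_sq blk gam (v + Gam_mul blk gam g)
     = (\<Sum>j\<in>UNIV. (v$j)^2 / gam (blk j) + 2 * (g$j * v$j) + gam (blk j) * (g$j)^2)"
    unfolding wnorm_sq_def Gam_mul_def
  proof (rule sum.cong)
    fix j
    show "((v + (\<chi> j. gam (blk j) * g $ j)) $ j)\<^sup>2 / gam (blk j) =
         (v $ j)\<^sup>2 / gam (blk j) + 2 * (g $ j * v $ j) + gam (blk j) * (g $ j)\<^sup>2"
      using gam_pos[of "blk j"] by (simp add: field_simps power2_eq_square)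
  qed simp
  then show ?thesis unfolding sum.distrib wnorm_sq_def inner_vec_def by (simp add: sum_distrib_left)
qed

lemma prox_min:
  assumes z: "z \<in> Tmap blk gam gf G x"
  shows "EE x z \<le> EE x w"
proof -
  define g where "g = gradF gf x"
  define K where "K = (\<Sum>j\<in>UNIV. gam (blk j) * (g$j)^2)"
  define u where "u = x - Gam_mul blk gam g"
  have pm: "G z + ereal (wnorm_sq blk gam (z - u) / 2) \<le> G w + ereal (wnorm_sq blk gam (w - u) / 2)"
    using z unfolding Tmap_def prox_set_def u_def g_def by blast
  have rw: "G v + ereal (wnorm_sq blk gam (v - u) / 2) = EE x v + ereal (K / 2 - Fsum f x)" for v
  proof -
    have "v - u = (v - x) + Gam_mul blk gam g" by (simp add: u_def)
    then have "wnorm_sq blk gam (v - u) = wnorm_sq blk gam (v - x) + 2 * (g \<bullet> (v - x)) + K"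
      by (simp only: wn_shift K_def)
    then have "wnorm_sq blk gam (v - u) / 2 = AA x v + (K / 2 - Fsum f x)"
      by (simp add: AA_def g_def field_simps)
    then show ?thesis by (cases "G v") (simp_all add: EE_eq)
  qed
  from pm have "EE x z + ereal (K / 2 - Fsum f x) \<le> EE x w + ereal (K / 2 - Fsum f x)"
    by (simp add: rw)
  then show ?thesis by (simp add: ereal_add_le_add_iff2)
qed

lemma FBE_at: "z \<in> Tmap blk gam gf G x \<Longrightarrow> FBE blk gam f gf G x = EE x z"
  unfolding FBE_EE by (rule antisym) (auto intro: INF_lower INF_greatest prox_min)

lemma G_fin: 
  assumes z: "z \<in> Tmap blk gam gf G x"
  shows "G z = ereal (real_of_ereal (G z))"
proof -
  obtain w0 where w0: "G w0 \<noteq> \<infinity>" using G_proper unfolding proper_fun_def by blast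
  have "EE x z \<le> EE x w0" by (rule prox_min[OF z])
  moreover have "EE x w0 \<noteq> \<infinity>" using w0 by (simp add: EE_eq)
  ultimately have "G z \<noteq> \<infinity>" by (auto simp: EE_eq)
  moreover have "G z \<noteq> -\<infinity>" using G_proper unfolding proper_fun_def by blast
  ultimately show ?thesis by (cases "G z") auto
qed

lemma EE_ge: "ereal (Fsum f w + SS x w) + G w \<le> EE x w"
  unfolding EE_eq by (rule add_right_mono) (simp add: key_ineq)

lemma SS_nonneg: "SS x w \<ge> 0"
  unfolding SS_def
proof (rule sum_nonneg)
  fix i
  show "0 \<le> xi i / (2 * gam i) * (nb i (w - x))\<^sup>2"
    using xi_pos[of i] gam_pos[of i] by simp
qed


end

context setting2 begin
lemma step_ineq:
  assumes upd: "\<And>j. x' $ j = (if blk j \<in> I then z $ j else x $ j)"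
  shows "AA x' z \<le> AA x z - (\<Sum>i\<in>I. xi i / (2 * gam i) * (nb i (z - x))^2)"
proof -
  have per: "trm z x' i \<le> trm z x i - (if i \<in> I then xi i / (2 * gam i) * (nb i (z - x))^2 else 0)" for i
  proof (cases "i \<in> I")
    case True
    have bz: "blk_part blk i x' = blk_part blk i z"
      using True by (auto simp: vec_eq_iff bp_nth upd)
    have "gf i x' \<bullet> (z - x') = 0"
      by (subst gf_inner_bp) (simp add: bp_diff bz)
    moreover have "nb i (z - x') = 0" by (simp add: nb_def bp_diff bz)
    moreover have "f i x' = f i z" by (rule f_block[OF bz])
    ultimately have t1: "trm z x' i = f i z / real CARD('b)" by (simp add: trm_def)
    have d: "f i z / real CARD('b) \<le> (f i x + gf i x \<bullet> (z - x) + L i / 2 * (nb i (z - x))^2) / real CARD('b)"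
      using descent[of i z x] by (simp add: divide_right_mono nb_def)
    have e: "(f i x + gf i x \<bullet> (z - x) + L i / 2 * (nb i (z - x))^2) / real CARD('b)
        = trm z x i - xi i / (2 * gam i) * (nb i (z - x))^2"
      unfolding trm_def xi_eq using gam_pos[of i] by (simp add: field_simps)
    show ?thesis using True t1 d e by simp
  next
    case False
    have bx: "blk_part blk i x' = blk_part blk i x"
      using False unfolding vec_eq_iff bp_nth upd by auto
    have g: "gf i x' = gf i x" by (rule gf_block[OF bx])
    have fx: "f i x' = f i x" by (rule f_block[OF bx])
    have bzx: "blk_part blk i (z - x') = blk_part blk i (z - x)" unfolding bp_diff bx ..
    have "gf i x \<bullet> (z - x') = gf i x \<bullet> blk_part blk i (z - x')" by (rule gf_inner_bp)
    also have "\<dots> = gf i x \<bullet> blk_part blk i (z - x)" unfolding bzx ..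
    also have "\<dots> = gf i x \<bullet> (z - x)" by (rule gf_inner_bp[symmetric])
    finally have gi: "gf i x \<bullet> (z - x') = gf i x \<bullet> (z - x)" .
    have "trm z x' i = trm z x i" unfolding trm_def nb_def g fx gi bzx ..
    then show ?thesis using False by simp
  qed
  have h1: "AA x' z \<le> (\<Sum>i\<in>UNIV. trm z x i - (if i \<in> I then xi i / (2 * gam i) * (nb i (z - x))^2 else 0))"
    unfolding AA_sum by (rule sum_mono) (rule per)
  have h2: "(\<Sum>i\<in>UNIV. (if i \<in> I then xi i / (2 * gam i) * (nb i (z - x))^2 else 0)) = (\<Sum>i\<in>I. xi i / (2 * gam i) * (nb i (z - x))^2)"
    by (simp add: sum.If_cases)
  show ?thesis using h1 unfolding sum_subtractf h2 AA_sum .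
qed

lemma step_norm:
  assumes upd: "\<And>j. x' $ j = (if blk j \<in> I then z $ j else x $ j)"
  shows "(norm (x' - x))^2 = (\<Sum>i\<in>I. (nb i (z - x))^2)"
proof -
  have "blk_part blk i (x' - x) = (if i \<in> I then blk_part blk i (z - x) else 0)" for i
    by (auto simp: vec_eq_iff bp_nth upd)
  then have "(norm (x' - x))^2 = (\<Sum>i\<in>UNIV. if i \<in> I then (nb i (z - x))^2 else 0)"
    unfolding nb_def by (subst norm_blocks[of _ blk]) (intro sum.cong, auto)
  also have "\<dots> = (\<Sum>i\<in>I. (nb i (z - x))^2)"
    by (simp add: sum.If_cases)
  finally show ?thesis .
qed

definition cc where "cc = Min (range (\<lambda>i. xi i / (2 * gam i)))"

lemma cc_pos: "cc > 0" unfolding cc_def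
  using xi_pos gam_pos by (subst Min_gr_iff) auto

lemma cc_le: "cc \<le> xi i / (2 * gam i)" unfolding cc_def by (rule Min_le) auto

lemma SS_lower: "cc * (norm (w - x))^2 \<le> SS x w"
proof -
  have "cc * (norm (w - x))^2 = (\<Sum>i\<in>UNIV. cc * (nb i (w - x))^2)"
    unfolding nb_def by (subst norm_blocks[of _ blk]) (simp add: sum_distrib_left)
  also have "\<dots> \<le> SS x w" unfolding SS_def
    by (rule sum_mono) (rule mult_right_mono[OF cc_le], simp)
  finally show ?thesis .
qed

lemma f_cont: "isCont (f i) p"
  using f_grad[of i p] by (rule has_derivative_continuous)

lemma gf_cont: "isCont (gf i) p"
proof -
  have "(L i)-lipschitz_on UNIV (gf i)"
    unfolding lipschitz_on_def dist_norm
  proof (intro conjI ballI)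
    fix u v :: "real^'n"
    show "norm (gf i u - gf i v) \<le> L i * norm (u - v)"
      using f_lip[of i u v] bp_norm_le[of blk i "u - v"] L_nonneg[of i]
      by (meson mult_left_mono order_trans)
  qed (rule L_nonneg)
  then have "continuous_on UNIV (gf i)" by (rule lipschitz_on_continuous_on)
  then show ?thesis by (simp add: continuous_on_eq_continuous_at)
qed

lemma AA_tendsto:
  assumes y: "(y \<longlongrightarrow> p) F" and w: "(w \<longlongrightarrow> q) F"
  shows "((\<lambda>k. AA (y k) (w k)) \<longlongrightarrow> AA p q) F"
proof -
  have fy: "((\<lambda>k. f i (y k)) \<longlongrightarrow> f i p) F" for i
    by (rule isCont_tendsto_compose[OF f_cont y])
  have gy: "((\<lambda>k. gf i (y k)) \<longlongrightarrow> gf i p) F" for i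
    by (rule isCont_tendsto_compose[OF gf_cont y])
  have wy: "((\<lambda>k. w k - y k) \<longlongrightarrow> q - p) F" by (intro tendsto_intros w y)
  have "((\<lambda>k. wnorm_sq blk gam (w k - y k)) \<longlongrightarrow> wnorm_sq blk gam (q - p)) F"
    unfolding wnorm_sq_def
    using gam_pos by (intro tendsto_intros wy) (auto simp: less_imp_neq[symmetric])
  then show ?thesis
    unfolding AA_def Fsum_def gradF_def
    by (intro tendsto_intros fy gy wy) (simp_all add: y w)
qed

end


lemma lsc_seq:
  fixes G :: "'a::metric_space \<Rightarrow> ereal"
  assumes G: "lsc G" and y: "y \<longlonglongrightarrow> q" and gy: "\<And>k. G (y k) = ereal (g k)" and g: "g \<longlonglongrightarrow> l"
  shows "G q \<le> ereal l"
proof (rule dense_le)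
  fix c assume c: "c < G q"
  have "G q \<le> Liminf (at q) G" using G unfolding lsc_def by blast
  with c have "eventually (\<lambda>u. c < G u) (at q)"
    using le_Liminf_iff by blast
  then obtain d where d: "d > 0" "\<And>u. u \<noteq> q \<Longrightarrow> dist u q < d \<Longrightarrow> c < G u"
    unfolding eventually_at by auto
  have "\<forall>u. dist u q < d \<longrightarrow> c < G u" using d c by (metis)
  moreover have "eventually (\<lambda>k. dist (y k) q < d) sequentially"
    using y d(1) by (rule tendstoD)
  ultimately have ev: "eventually (\<lambda>k. c \<le> ereal (g k)) sequentially"
    by (auto elim!: eventually_mono simp: gy[symmetric] less_imp_le)
  have "(\<lambda>k. ereal (g k)) \<longlonglongrightarrow> ereal l" using g by (rule tendsto_ereal)
  then show "c \<le> ereal l"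
    using ev by (intro tendsto_le[OF trivial_limit_sequentially]) auto
qed


locale alg = setting2 blk f gf L gam G
  for blk :: "'n::finite \<Rightarrow> 'b::finite"
    and f :: "'b \<Rightarrow> real^'n \<Rightarrow> real"
    and gf :: "'b \<Rightarrow> real^'n \<Rightarrow> real^'n"
    and L gam :: "'b \<Rightarrow> real"
    and G :: "real^'n \<Rightarrow> ereal" +
  fixes x z :: "nat \<Rightarrow> real^'n"
    and I :: "nat \<Rightarrow> 'b set"
  assumes z_T: "\<And>k. z k \<in> Tmap blk gam gf G (x k)"
    and x_upd: "\<And>k j. x (Suc k) $ j = (if blk j \<in> I (Suc k) then z k $ j else x k $ j)"
begin

definition gz where "gz k = real_of_ereal (G (z k))"
definition a where "a k = AA (x k) (z k) + gz k"
definition \<nu> where "\<nu> k = (\<Sum>i\<in>I (Suc k). xi i / (2 * gam i) * (nb i (z k - x k))^2)"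

lemma Gz: "G (z k) = ereal (gz k)"
  unfolding gz_def using G_fin[OF z_T] .

lemma FBE_a: "FBE blk gam f gf G (x k) = ereal (a k)"
  unfolding FBE_at[OF z_T] EE_eq a_def Gz by simp

lemma a_step: "a (Suc k) \<le> a k - \<nu> k"
proof -
  have "ereal (a (Suc k)) \<le> EE (x (Suc k)) (z k)"
    unfolding FBE_a[symmetric] FBE_EE by (rule INF_lower) simp
  also have "\<dots> = ereal (AA (x (Suc k)) (z k) + gz k)" by (simp add: EE_eq Gz)
  finally have "a (Suc k) \<le> AA (x (Suc k)) (z k) + gz k" by simp
  moreover have "AA (x (Suc k)) (z k) \<le> AA (x k) (z k) - \<nu> k"
    unfolding \<nu>_def by (rule step_ineq[OF x_upd])
  ultimately show ?thesis unfolding a_def by linarith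
qed

lemma \<nu>_ge: "cc * (norm (x (Suc k) - x k))^2 \<le> \<nu> k"
proof -
  have "cc * (norm (x (Suc k) - x k))^2 = (\<Sum>i\<in>I (Suc k). cc * (nb i (z k - x k))^2)"
    unfolding step_norm[OF x_upd] by (simp add: sum_distrib_left)
  also have "\<dots> \<le> \<nu> k" unfolding \<nu>_def
    by (rule sum_mono) (rule mult_right_mono[OF cc_le], simp)
  finally show ?thesis .
qed

lemma \<nu>_nonneg: "\<nu> k \<ge> 0"
  using \<nu>_ge[of k] cc_pos by (smt (verit) zero_le_power2 mult_nonneg_nonneg)

lemma a_dec: "decseq a"
  unfolding decseq_Suc_iff using a_step \<nu>_nonneg by (smt (verit))

lemma m_exists: "\<exists>m. (INF y. Phi f G y) \<le> ereal m \<and> (\<forall>w. ereal m \<le> Phi f G w)"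
proof -
  obtain xs where xs: "\<And>y. Phi f G xs \<le> Phi f G y" using argmin_ne by blast
  obtain w0 where w0: "G w0 \<noteq> \<infinity>" using G_proper unfolding proper_fun_def by blast
  have "Phi f G xs \<noteq> \<infinity>"
    using xs[of w0] w0 by (auto simp: Phi_def)
  moreover have "Phi f G xs \<noteq> -\<infinity>"
    using G_proper unfolding proper_fun_def Phi_def by (cases "G xs") auto
  ultimately obtain m where m: "Phi f G xs = ereal m" by (cases "Phi f G xs") auto
  have "(INF y. Phi f G y) \<le> ereal m" unfolding m[symmetric] by (rule INF_lower) simp
  moreover have "\<forall>w. ereal m \<le> Phi f G w" using xs m by metis
  ultimately show ?thesis by blast
qed

definition mm where "mm = (SOME m. (INF y. Phi f G y) \<le> ereal m \<and> (\<forall>w. ereal m \<le> Phi f G w))"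

lemma mm_inf: "(INF y. Phi f G y) \<le> ereal mm" and mm_le: "ereal mm \<le> Phi f G w"
  using someI_ex[OF m_exists] unfolding mm_def[symmetric] by blast+

lemma SS_le: "SS (x k) (z k) \<le> a k - mm"
proof -
  have "ereal mm \<le> ereal (Fsum f (z k) + gz k)"
    using mm_le[of "z k"] by (simp add: Phi_def Gz)
  moreover have "Fsum f (z k) + SS (x k) (z k) \<le> AA (x k) (z k)" by (rule key_ineq)
  ultimately show ?thesis unfolding a_def by simp
qed

lemma a_ge: "mm \<le> a k"
  using SS_le[of k] SS_nonneg[of "x k" "z k"] by linarith

lemma a_conv: "\<exists>l. a \<longlonglongrightarrow> l \<and> (\<forall>k. l \<le> a k) \<and> mm \<le> l"
proof -
  obtain l where l: "a \<longlonglongrightarrow> l" "\<forall>k. l \<le> a k"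
    using decseq_convergent[OF a_dec, of mm] a_ge by blast
  have "mm \<le> l" using l(1) a_ge by (intro LIMSEQ_le_const) auto
  with l show ?thesis by blast
qed

lemma zx_bound: "cc * (norm (z k - x k))^2 \<le> a 0 - mm"
proof -
  have "a k \<le> a 0" using a_dec by (simp add: decseq_def)
  then show ?thesis using SS_lower[of "z k" "x k"] SS_le[of k] by linarith
qed

definition BB where "BB = sqrt ((a 0 - mm) / cc)"

lemma zx_norm: "norm (z k - x k) \<le> BB"
  unfolding BB_def using zx_bound[of k] cc_pos
  by (intro real_le_rsqrt) (simp add: field_simps)

lemma accum:
  assumes r: "strict_mono r" and xr: "(x \<circ> r) \<longlonglongrightarrow> p" and al: "a \<longlonglongrightarrow> l"
  shows "FBE blk gam f gf G p = ereal l"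
proof (rule antisym)
  have alr: "(a \<circ> r) \<longlonglongrightarrow> l" by (rule LIMSEQ_subseq_LIMSEQ[OF al r])
  have "bounded (range (x \<circ> r))" using xr by (rule convergent_imp_bounded)
  then obtain R where R: "\<And>k. norm (x (r k)) \<le> R" unfolding bounded_iff by auto
  have "norm (z (r k)) \<le> R + BB" for k
    using R[of k] zx_norm[of "r k"] norm_triangle_ineq[of "z (r k) - x (r k)" "x (r k)"] by simp
  then have "bounded (range (z \<circ> r))" unfolding bounded_iff by auto
  then obtain w s where s: "strict_mono s" and zs: "(z \<circ> r \<circ> s) \<longlonglongrightarrow> w"
    using bounded_imp_convergent_subsequence by blast
  have xs: "(x \<circ> r \<circ> s) \<longlonglongrightarrow> p" by (rule LIMSEQ_subseq_LIMSEQ[OF xr s])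
  have as: "(a \<circ> r \<circ> s) \<longlonglongrightarrow> l" by (rule LIMSEQ_subseq_LIMSEQ[OF alr s])
  have AAs: "(\<lambda>k. AA ((x \<circ> r \<circ> s) k) ((z \<circ> r \<circ> s) k)) \<longlonglongrightarrow> AA p w"
    by (rule AA_tendsto[OF xs zs])
  have gzs: "(\<lambda>k. a ((r \<circ> s) k) - AA ((x \<circ> r \<circ> s) k) ((z \<circ> r \<circ> s) k)) \<longlonglongrightarrow> l - AA p w"
    using tendsto_diff[OF as AAs] by (simp add: comp_def)
  have "G w \<le> ereal (l - AA p w)"
  proof (rule lsc_seq[OF G_lsc zs])
    fix k show "G ((z \<circ> r \<circ> s) k) = ereal (a ((r \<circ> s) k) - AA ((x \<circ> r \<circ> s) k) ((z \<circ> r \<circ> s) k))"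
      by (simp add: a_def Gz)
  qed (rule gzs)
  then have "EE p w \<le> ereal l"
    unfolding EE_eq by (cases "G w") auto
  then show "FBE blk gam f gf G p \<le> ereal l"
    unfolding FBE_EE by (meson INF_lower UNIV_I order_trans)
next
  have alr: "(a \<circ> r) \<longlonglongrightarrow> l" by (rule LIMSEQ_subseq_LIMSEQ[OF al r])
  show "ereal l \<le> FBE blk gam f gf G p"
    unfolding FBE_EE
  proof (rule INF_greatest)
    fix w
    show "ereal l \<le> EE p w"
    proof (cases "G w")
      case (real gw)
      have le: "a (r k) \<le> AA (x (r k)) w + gw" for k
      proof -
        have "ereal (a (r k)) \<le> EE (x (r k)) w"
          unfolding FBE_a[symmetric] FBE_EE by (rule INF_lower) simp
        then show ?thesis by (simp add: EE_eq real)
      qed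
      have "(\<lambda>k. AA ((x \<circ> r) k) w + gw) \<longlonglongrightarrow> AA p w + gw"
        by (intro tendsto_intros AA_tendsto[OF xr]) 
      then have "l \<le> AA p w + gw"
        using alr le by (intro tendsto_le[OF trivial_limit_sequentially]) (auto simp: comp_def)
      then show ?thesis by (simp add: EE_eq real)
    next
      case PInf then show ?thesis by (simp add: EE_eq)
    next
      case MInf then show ?thesis using G_proper unfolding proper_fun_def by blast
    qed
  qed
qed

lemma summ: "summable (\<lambda>k. (norm (x (Suc k) - x k))^2)"
proof -
  obtain l where al: "a \<longlonglongrightarrow> l" using a_conv by blast
  have "summable (\<lambda>k. (a (Suc k) - a k) * (- 1 / cc))"
    by (rule summable_mult2[OF telescope_summable[OF al]])
  then show ?thesis
  proof (rule summable_comparison_test')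
    fix k
    have "cc * (norm (x (Suc k) - x k))^2 \<le> a k - a (Suc k)"
      using \<nu>_ge[of k] a_step[of k] by linarith
    then have "(norm (x (Suc k) - x k))^2 \<le> (a k - a (Suc k)) / cc"
      using cc_pos by (simp add: field_simps)
    moreover have "(a k - a (Suc k)) / cc = (a (Suc k) - a k) * (- 1 / cc)"
      using cc_pos by (simp add: field_simps)
    ultimately show "norm ((norm (x (Suc k) - x k))^2) \<le> (a (Suc k) - a k) * (- 1 / cc)"
      by simp
  qed
qed

lemma coercive_bounded:
  assumes coer: "(Phi f G \<longlongrightarrow> \<infinity>) at_infinity"
  shows "bounded (range x) \<and> bounded (range z)"
proof -
  have "eventually (\<lambda>y. ereal (a 0) < Phi f G y) at_infinity"
    using coer unfolding tendsto_PInfty by blast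
  then obtain b where b: "\<And>y. b \<le> norm y \<Longrightarrow> ereal (a 0) < Phi f G y"
    unfolding eventually_at_infinity by blast
  have zb: "norm (z k) < b" for k
  proof (rule ccontr)
    assume "\<not> norm (z k) < b"
    then have "ereal (a 0) < Phi f G (z k)" using b by simp
    then have "a 0 < Fsum f (z k) + gz k" by (simp add: Phi_def Gz)
    moreover have "Fsum f (z k) + SS (x k) (z k) \<le> AA (x k) (z k)" by (rule key_ineq)
    moreover have "a k \<le> a 0" using a_dec by (simp add: decseq_def)
    ultimately show False using SS_nonneg[of "x k" "z k"] unfolding a_def by linarith
  qed
  have "norm (x k) \<le> b + BB" for k
    using zb[of k] zx_norm[of k] norm_triangle_ineq[of "x k - z k" "z k"] norm_minus_commute[of "z k" "x k"]
    by simp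
  then have "bounded (range x)" unfolding bounded_iff by auto
  moreover have "bounded (range z)" unfolding bounded_iff using zb by (auto intro: less_imp_le)
  ultimately show ?thesis ..
qed

lemma main:
  shows "(\<forall>i. (real CARD('b) - gam i * L i) / real CARD('b) > 0)
    \<and> (\<forall>k. FBE blk gam f gf G (x (Suc k))
          \<le> FBE blk gam f gf G (x k)
             - ereal (\<Sum>i\<in>I (Suc k). ((real CARD('b) - gam i * L i) / real CARD('b)) / (2 * gam i)
                        * (norm (blk_part blk i (z k - x k)))^2))
    \<and> decseq (\<lambda>k. FBE blk gam f gf G (x k))
    \<and> (\<exists>\<Phi>s::real. ((\<lambda>k. FBE blk gam f gf G (x k)) \<longlonglongrightarrow> ereal \<Phi>s)
          \<and> (INF y. Phi f G y) \<le> ereal \<Phi>s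
          \<and> (\<forall>p. (\<exists>r. strict_mono r \<and> (x \<circ> r) \<longlonglongrightarrow> p) \<longrightarrow> FBE blk gam f gf G p = ereal \<Phi>s))
    \<and> summable (\<lambda>k. (norm (x (Suc k) - x k))^2)
    \<and> ((Phi f G \<longlongrightarrow> \<infinity>) at_infinity \<longrightarrow> bounded (range x) \<and> bounded (range z))"
proof (intro conjI allI impI)
  fix i show "(real CARD('b) - gam i * L i) / real CARD('b) > 0" using xi_pos[of i] by (simp add: xi_def)
next
  fix k
  have "ereal (a (Suc k)) \<le> ereal (a k - \<nu> k)" using a_step[of k] by simp
  then show "FBE blk gam f gf G (x (Suc k))
          \<le> FBE blk gam f gf G (x k)
             - ereal (\<Sum>i\<in>I (Suc k). ((real CARD('b) - gam i * L i) / real CARD('b)) / (2 * gam i)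
                        * (norm (blk_part blk i (z k - x k)))^2)"
    unfolding FBE_a by (simp add: \<nu>_def xi_def nb_def)
next
  show "decseq (\<lambda>k. FBE blk gam f gf G (x k))"
    using a_dec unfolding FBE_a decseq_def by simp
next
  obtain l where l: "a \<longlonglongrightarrow> l" "mm \<le> l" using a_conv by blast
  show "\<exists>\<Phi>s::real. ((\<lambda>k. FBE blk gam f gf G (x k)) \<longlonglongrightarrow> ereal \<Phi>s)
          \<and> (INF y. Phi f G y) \<le> ereal \<Phi>s
          \<and> (\<forall>p. (\<exists>r. strict_mono r \<and> (x \<circ> r) \<longlonglongrightarrow> p) \<longrightarrow> FBE blk gam f gf G p = ereal \<Phi>s)"
  proof (intro exI conjI allI impI)
    show "(\<lambda>k. FBE blk gam f gf G (x k)) \<longlonglongrightarrow> ereal l"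
      unfolding FBE_a by (rule tendsto_ereal[OF l(1)])
    show "(INF y. Phi f G y) \<le> ereal l" using mm_inf l(2) by (simp add: order_trans)
    fix p assume "\<exists>r. strict_mono r \<and> (x \<circ> r) \<longlonglongrightarrow> p"
    then obtain r where "strict_mono r" "(x \<circ> r) \<longlonglongrightarrow> p" by blast
    then show "FBE blk gam f gf G p = ereal l" using accum l(1) by blast
  qed
next
  show "summable (\<lambda>k. (norm (x (Suc k) - x k))^2)" by (rule summ)
next
  assume "(Phi f G \<longlongrightarrow> \<infinity>) at_infinity"
  then show "bounded (range x)" "bounded (range z)" using coercive_bounded by blast+
qed

end

theorem lemma2p5:
  fixes blk :: "'n::finite \<Rightarrow> 'b::finite"
    and f :: "'b \<Rightarrow> real^'n \<Rightarrow> real"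
    and gf :: "'b \<Rightarrow> real^'n \<Rightarrow> real^'n"
    and L gam :: "'b \<Rightarrow> real"
    and G :: "real^'n \<Rightarrow> ereal"
    and x z :: "nat \<Rightarrow> real^'n"
    and I :: "nat \<Rightarrow> 'b set"
  assumes f_block: "\<And>i u v. blk_part blk i u = blk_part blk i v \<Longrightarrow> f i u = f i v"
    and f_grad: "\<And>i u. (f i has_derivative (\<lambda>h. gf i u \<bullet> h)) (at u)"
    and L_nonneg: "\<And>i. L i \<ge> 0"
    and f_lip: "\<And>i u v. norm (gf i u - gf i v) \<le> L i * norm (blk_part blk i (u - v))"
    and G_proper: "proper_fun G"
    and G_lsc: "lsc G"
    and argmin_ne: "\<exists>xs. \<forall>y. Phi f G xs \<le> Phi f G y"
    and gam_pos: "\<And>i. gam i > 0"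
    and gam_lt: "\<And>i. gam i * L i < real CARD('b)"
    and z_T: "\<And>k. z k \<in> Tmap blk gam gf G (x k)"
    and x_upd: "\<And>k j. x (Suc k) $ j = (if blk j \<in> I (Suc k) then z k $ j else x k $ j)"
  shows "(\<forall>i. (real CARD('b) - gam i * L i) / real CARD('b) > 0)
    \<and> (\<forall>k. FBE blk gam f gf G (x (Suc k))
          \<le> FBE blk gam f gf G (x k)
             - ereal (\<Sum>i\<in>I (Suc k). ((real CARD('b) - gam i * L i) / real CARD('b)) / (2 * gam i)
                        * (norm (blk_part blk i (z k - x k)))^2))
    \<and> decseq (\<lambda>k. FBE blk gam f gf G (x k))
    \<and> (\<exists>\<Phi>s::real. ((\<lambda>k. FBE blk gam f gf G (x k)) \<longlonglongrightarrow> ereal \<Phi>s)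
          \<and> (INF y. Phi f G y) \<le> ereal \<Phi>s
          \<and> (\<forall>p. (\<exists>r. strict_mono r \<and> (x \<circ> r) \<longlonglongrightarrow> p) \<longrightarrow> FBE blk gam f gf G p = ereal \<Phi>s))
    \<and> summable (\<lambda>k. (norm (x (Suc k) - x k))^2)
    \<and> ((Phi f G \<longlongrightarrow> \<infinity>) at_infinity \<longrightarrow> bounded (range x) \<and> bounded (range z))"
proof -
  interpret alg blk f gf L gam G x z I
    by unfold_locales (fact assms)+
  show ?thesis by (rule main)
qed

end
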